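(* Let $F:\mathbb{R}^d\to\mathbb{R}\cup\{+\infty\}$ be convex with $e^{-F}$ integrable, let $F_\ast\coloneqq\inf F$ (attained at some $x_\ast$), and let $\pi\propto\exp(-F)$. 1. For all $\lambda\in(0,1)$, $\mathbb E_\pi\exp(\lambda(F-F_\ast))\le(1-\lambda)^{-d}$. 2. For all $\delta\in(0,1)$, $\pi\bigl(F-F_\ast\ge d+\sqrt{2d\log(1/\delta)}+\log(1/\delta)\bigr)\le\delta$. *)

theory Defs
  imports "HOL-Analysis.Analysis"
begin

text \<open>Convexity of an extended-valued function F : R^d -> R \<union> {+\<infinity>}
  (values in ereal; the value -\<infinity> is excluded separately by an assumption).\<close>
definition ereal_convex :: "('a::real_vector \<Rightarrow> ereal) \<Rightarrow> bool" where
  "ereal_convex F \<longleftrightarrow>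
     (\<forall>x y. \<forall>t::real. 0 < t \<and> t < 1 \<longrightarrow>
        F ((1 - t) *\<^sub>R x + t *\<^sub>R y) \<le> ereal (1 - t) * F x + ereal t * F y)"

definition gibbs_weight :: "('a \<Rightarrow> ereal) \<Rightarrow> 'a \<Rightarrow> real" where
  "gibbs_weight F x = (case F x of ereal r \<Rightarrow> exp (- r) | _ \<Rightarrow> 0)"

definition gibbs_Z :: "('a::euclidean_space \<Rightarrow> ereal) \<Rightarrow> real" where
  "gibbs_Z F = integral\<^sup>L lebesgue (gibbs_weight F)"

definition gibbs :: "('a::euclidean_space \<Rightarrow> ereal) \<Rightarrow> 'a measure" where
  "gibbs F = density lebesgue (\<lambda>x. ennreal (gibbs_weight F x / gibbs_Z F))"

definition exp_tilt :: "real \<Rightarrow> ('a \<Rightarrow> ereal) \<Rightarrow> real \<Rightarrow> 'a \<Rightarrow> ennreal" where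
  "exp_tilt l F c x = (case F x of ereal r \<Rightarrow> ennreal (exp (l * (r - c))) | _ \<Rightarrow> \<infinity>)"

end

theory Submission
  imports Defs
begin

lemma nn_integral_lebesgue_affine:
  fixes f :: "'a::euclidean_space \<Rightarrow> ennreal" and c :: real and t :: 'a
  assumes f[measurable]: "f \<in> borel_measurable lebesgue" and c: "c \<noteq> 0"
  shows "(\<integral>\<^sup>+x. f x \<partial>lebesgue) = ennreal (\<bar>c\<bar> ^ DIM('a)) * (\<integral>\<^sup>+x. f (t + c *\<^sub>R x) \<partial>lebesgue)"
proof -
  have T: "(\<lambda>x. t + (\<Sum>j\<in>Basis. (c * (x \<bullet> j)) *\<^sub>R j)) = (\<lambda>x::'a. t + c *\<^sub>R x)"
    unfolding scaleR_scaleR[symmetric] scaleR_sum_right[symmetric] euclidean_representation by simp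
  have eq: "lebesgue = density (distr lebesgue lebesgue (\<lambda>x::'a. t + c *\<^sub>R x)) (\<lambda>_. ennreal (\<bar>c\<bar> ^ DIM('a)))"
    using lebesgue_affine_euclidean[of "\<lambda>_. c" t] c unfolding T by (simp add: prod_constant)
  have meas: "(\<lambda>x::'a. t + c *\<^sub>R x) \<in> lebesgue \<rightarrow>\<^sub>M lebesgue"
    using lebesgue_affine_measurable[of "\<lambda>_. c" t] c unfolding T by simp
  have "(\<integral>\<^sup>+x. f x \<partial>lebesgue) = (\<integral>\<^sup>+x. f x \<partial>density (distr lebesgue lebesgue (\<lambda>x::'a. t + c *\<^sub>R x)) (\<lambda>_. ennreal (\<bar>c\<bar> ^ DIM('a))))"
    using eq by simp
  also have "\<dots> = \<integral>\<^sup>+ x. ennreal (\<bar>c\<bar> ^ DIM('a)) * f x \<partial>distr lebesgue lebesgue (\<lambda>x. t + c *\<^sub>R x)"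
    by (subst nn_integral_density) auto
  also have "\<dots> = ennreal (\<bar>c\<bar> ^ DIM('a)) * integral\<^sup>N (distr lebesgue lebesgue (\<lambda>x. t + c *\<^sub>R x)) f"
    using f measurable_distr_eq1 nn_integral_cmult by blast
  also have "\<dots> = ennreal (\<bar>c\<bar> ^ DIM('a)) * (\<integral>\<^sup>+x. f(t + c *\<^sub>R x) \<partial>lebesgue)"
    using meas by (subst nn_integral_distr) auto
  finally show ?thesis .
qed

lemma tail_ineq:
  fixes d L :: real
  assumes d: "d \<ge> 1" and L: "L > 0"
  defines "t \<equiv> d + sqrt (2 * d * L) + L"
  shows "(d / t) powr (- d) * exp (- ((1 - d / t) * t)) \<le> exp (- L)"
proof -
  define a where "a = sqrt (2 * d * L) / d"
  have a0: "a \<ge> 0" using d L by (simp add: a_def)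
  have a2: "a^2 = 2 * L / d" using d L by (simp add: a_def power_divide power2_eq_square)
  have sq0: "sqrt (2 * d * L) \<ge> 0" using d L by simp
  have tpos: "t > 0" using d L sq0 unfolding t_def by linarith
  have td: "t / d = 1 + a + a^2 / 2" using d L a2 by (simp add: t_def a_def field_simps)
  have pos: "t / d > 0" using tpos d by simp
  have "ln (t / d) \<le> ln (exp a)"
    using exp_lower_Taylor_quadratic[OF a0] td pos by (subst ln_le_cancel_iff) auto
  hence "ln (t / d) \<le> a" by simp
  hence "d * ln (t / d) \<le> d * a" using d by (intro mult_left_mono) auto
  hence dl: "d * ln (t / d) \<le> sqrt (2 * d * L)" using d by (simp add: a_def)
  have "(d / t) powr (- d) = exp (d * ln (t / d))"
    using d tpos by (simp add: powr_def ln_div field_simps)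
  moreover have "(1 - d / t) * t = t - d" using tpos by (simp add: field_simps)
  ultimately have "(d / t) powr (- d) * exp (- ((1 - d / t) * t)) = exp (d * ln (t / d) - (t - d))"
    by (simp add: exp_add[symmetric])
  also have "\<dots> \<le> exp (- L)" using dl by (simp add: t_def)
  finally show ?thesis .
qed

theorem lemma6:
  fixes F :: "'a::euclidean_space \<Rightarrow> ereal" and xs :: 'a
  assumes no_minf: "\<And>x. F x \<noteq> - \<infinity>"
    and conv: "ereal_convex F"
    and integ: "integrable lebesgue (gibbs_weight F)"
    and Zpos: "gibbs_Z F > 0"
    and min: "\<And>x. F xs \<le> F x"
  shows "(\<forall>l::real. 0 < l \<and> l < 1 \<longrightarrow>
            (\<integral>\<^sup>+ x. exp_tilt l F (real_of_ereal (F xs)) x \<partial>gibbs F)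
              \<le> ennreal ((1 - l) powr (- real DIM('a))))
       \<and> (\<forall>\<delta>::real. 0 < \<delta> \<and> \<delta> < 1 \<longrightarrow>
            measure (gibbs F)
              {x. F x - F xs \<ge> ereal (real DIM('a) + sqrt (2 * real DIM('a) * ln (1 / \<delta>)) + ln (1 / \<delta>))}
              \<le> \<delta>)"
proof -
  define g where "g = gibbs_weight F"
  define Z where "Z = gibbs_Z F"
  have Z0: "Z > 0" using Zpos by (simp add: Z_def)
  have gE: "g x = exp (-r)" if "F x = ereal r" for x r using that by (simp add: g_def gibbs_weight_def)
  have gI: "g x = 0" if "F x = \<infinity>" for x using that by (simp add: g_def gibbs_weight_def)
  have g0: "g x \<ge> 0" for x by (cases "F x") (auto simp: g_def gibbs_weight_def)
  have integ': "integrable lebesgue g" using integ by (simp add: g_def)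
  have gmeas[measurable]: "g \<in> borel_measurable lebesgue"
    using integ' by (rule borel_measurable_integrable)
  have intg: "(\<integral>\<^sup>+x. ennreal (g x) \<partial>lebesgue) = ennreal Z"
    unfolding Z_def gibbs_Z_def g_def[symmetric] using integ' g0
    by (subst nn_integral_eq_integral) auto
  obtain c where c: "F xs = ereal c"
  proof (cases "F xs")
    case (real r) thus ?thesis using that by simp
  next
    case PInf
    then have "\<And>x. F x = \<infinity>" using min by (metis ereal_infty_less_eq(1))
    then have "g = (\<lambda>_. 0)" using gI by auto
    then have "Z = 0" by (simp add: Z_def gibbs_Z_def g_def)
    with Z0 show ?thesis by simp
  next
    case MInf with no_minf show ?thesis by simp
  qed
  have creal: "real_of_ereal (F xs) = c" using c by simp
  have et_eq: "exp_tilt l F c x = (if g x = 0 then \<infinity> else ennreal (exp (- l * c) * g x powr (- l)))" for x l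
  proof (cases "F x")
    case (real r)
    then show ?thesis
      by (simp add: exp_tilt_def gE powr_def exp_add[symmetric] algebra_simps)
  next
    case PInf then show ?thesis by (simp add: exp_tilt_def gI)
  next
    case MInf with no_minf show ?thesis by simp
  qed
  have et_meas[measurable]: "exp_tilt l F c \<in> borel_measurable lebesgue" for l
  proof -
    have "exp_tilt l F c = (\<lambda>x. if g x = 0 then \<infinity> else ennreal (exp (- l * c) * g x powr (- l)))"
      by (intro ext) (rule et_eq)
    also have "\<dots> \<in> borel_measurable lebesgue" by measurable
    finally show ?thesis .
  qed
  have part1: "(\<integral>\<^sup>+ x. exp_tilt l F c x \<partial>gibbs F) \<le> ennreal ((1 - l) powr (- real DIM('a)))"
    if l: "0 < l" "l < 1" for l
  proof -
    define s where "s = 1 - l"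
    have s: "0 < s" "s < 1" using l by (auto simp: s_def)
    define h where "h x = exp (- l * c) * g x powr s" for x
    have hmeas[measurable]: "h \<in> borel_measurable lebesgue" unfolding h_def[abs_def] by measurable
    have h0: "h x \<ge> 0" for x by (simp add: h_def)
    have hE: "h x = exp (- r + l * (r - c))" if "F x = ereal r" for x r
      using that by (simp add: h_def gE powr_def exp_add[symmetric] s_def algebra_simps)
    have hI: "h x = 0" if "F x = \<infinity>" for x using that by (simp add: h_def gI)
    define T where "T y = (1 - 1/s) *\<^sub>R xs + (1/s) *\<^sub>R y" for y
    have e1: "(1-l)*(1-1/s) = -l" and e2: "(1-l)*(1/s) = 1" using s by (auto simp: s_def field_simps)
    have Ty: "(1 - l) *\<^sub>R T y + l *\<^sub>R xs = y" for y
      unfolding T_def scaleR_add_right scaleR_scaleR e1 e2 by simp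
    have hT: "h (T y) \<le> g y" for y
    proof (cases "F (T y)")
      case PInf thus ?thesis using hI g0 by simp
    next
      case MInf thus ?thesis using no_minf by simp
    next
      case (real r)
      have "F ((1 - l) *\<^sub>R T y + l *\<^sub>R xs) \<le> ereal (1 - l) * F (T y) + ereal l * F xs"
        using conv l unfolding ereal_convex_def by blast
      also have "\<dots> = ereal ((1-l) * r + l * c)" using real c by simp
      finally have le: "F y \<le> ereal ((1-l)*r + l*c)" by (simp only: Ty)
      then obtain r' where r': "F y = ereal r'" using no_minf[of y] by (cases "F y") auto
      with le have "r' \<le> (1-l)*r + l*c" by simp
      hence "exp (- r + l * (r - c)) \<le> exp (- r')" by (simp add: algebra_simps)
      thus ?thesis using hE[OF real] gE[OF r'] by simp
    qed
    have sp: "(1/s) ^ DIM('a) = s powr (- real DIM('a))"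
      using s by (simp add: powr_minus powr_realpow power_one_over inverse_eq_divide)
    have "(\<integral>\<^sup>+x. ennreal (h x) \<partial>lebesgue) = ennreal (\<bar>1/s\<bar> ^ DIM('a)) * (\<integral>\<^sup>+y. ennreal (h ((1 - 1/s) *\<^sub>R xs + (1/s) *\<^sub>R y)) \<partial>lebesgue)"
      by (rule nn_integral_lebesgue_affine) (use s in auto)
    also have "\<dots> \<le> ennreal (\<bar>1/s\<bar> ^ DIM('a)) * (\<integral>\<^sup>+y. ennreal (g y) \<partial>lebesgue)"
      using hT unfolding T_def by (intro mult_left_mono nn_integral_mono) (auto intro: ennreal_leI)
    also have "\<dots> = ennreal (s powr (- real DIM('a)) * Z)"
      using intg s Z0 by (simp add: sp ennreal_mult)
    finally have hint: "(\<integral>\<^sup>+x. ennreal (h x) \<partial>lebesgue) \<le> ennreal (s powr (- real DIM('a)) * Z)" .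
    have pt: "ennreal (g x / Z) * exp_tilt l F c x = ennreal (h x) * ennreal (1 / Z)" for x
    proof (cases "F x")
      case (real r)
      have "ennreal (g x / Z) * exp_tilt l F c x = ennreal (exp (-r) / Z * exp (l * (r - c)))"
        using real Z0 by (simp add: exp_tilt_def gE ennreal_mult[symmetric] del: times_divide_eq_left)
      also have "exp (-r) / Z * exp (l * (r - c)) = h x * (1 / Z)"
        using real by (simp add: hE exp_add[symmetric])
      finally show ?thesis using Z0 h0[of x] by (simp add: ennreal_mult[symmetric])
    next
      case PInf then show ?thesis by (simp add: exp_tilt_def gI hI)
    next
      case MInf with no_minf show ?thesis by simp
    qed
    have "(\<integral>\<^sup>+ x. exp_tilt l F c x \<partial>gibbs F) = (\<integral>\<^sup>+x. ennreal (g x / Z) * exp_tilt l F c x \<partial>lebesgue)"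
      unfolding gibbs_def g_def[symmetric] Z_def[symmetric]
      by (rule nn_integral_density) measurable
    also have "\<dots> = (\<integral>\<^sup>+x. ennreal (h x) * ennreal (1 / Z) \<partial>lebesgue)" by (simp add: pt)
    also have "\<dots> = (\<integral>\<^sup>+x. ennreal (h x) \<partial>lebesgue) * ennreal (1 / Z)"
      by (rule nn_integral_multc) measurable
    also have "\<dots> \<le> ennreal (s powr (- real DIM('a)) * Z) * ennreal (1 / Z)"
      by (rule mult_right_mono[OF hint]) simp
    also have "\<dots> = ennreal (s powr (- real DIM('a)))"
      using Z0 by (simp add: ennreal_mult[symmetric])
    finally show ?thesis by (simp add: s_def)
  qed
  have part2: "measure (gibbs F)
              {x. F x - F xs \<ge> ereal (real DIM('a) + sqrt (2 * real DIM('a) * ln (1 / \<delta>)) + ln (1 / \<delta>))}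
              \<le> \<delta>" if dl: "0 < \<delta>" "\<delta> < 1" for \<delta>
  proof -
    define d where "d = real DIM('a)"
    define L where "L = ln (1 / \<delta>)"
    define tt where "tt = d + sqrt (2 * d * L) + L"
    define A where "A = {x. F x - F xs \<ge> ereal tt}"
    have d1: "d \<ge> 1" by (simp add: d_def DIM_positive Suc_le_eq)
    have L0: "L > 0" using dl by (simp add: L_def)
    have sq0: "sqrt (2 * d * L) \<ge> 0" using d1 L0 by simp
    have ttd: "tt > d" using sq0 L0 unfolding tt_def by linarith
    define l where "l = 1 - d / tt"
    have l: "0 < l" "l < 1" using ttd d1 by (auto simp: l_def field_simps)
    have eL: "exp (- L) = \<delta>" using dl by (simp add: L_def ln_div)
    have ind: "indicator A x \<le> exp_tilt l F c x * ennreal (exp (- l * tt))" for x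
    proof (cases "x \<in> A")
      case False thus ?thesis by simp
    next
      case True
      hence xA: "F x - ereal c \<ge> ereal tt" by (simp add: A_def c)
      show ?thesis
      proof (cases "F x")
        case (real r)
        with xA have "r - c \<ge> tt" by simp
        hence "l * tt \<le> l * (r - c)" using l by (intro mult_left_mono) auto
        hence "1 \<le> exp (l * (r - c)) * exp (- l * tt)"
          by (simp add: exp_add[symmetric])
        thus ?thesis using True real by (simp add: exp_tilt_def ennreal_mult[symmetric])
      next
        case PInf thus ?thesis using True by (simp add: exp_tilt_def)
      next
        case MInf with no_minf show ?thesis by simp
      qed
    qed
    have "emeasure (gibbs F) A \<le> (\<integral>\<^sup>+ x. exp_tilt l F c x * ennreal (exp (- l * tt)) \<partial>gibbs F)"
    proof (cases "A \<in> sets (gibbs F)")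
      case True
      then have "emeasure (gibbs F) A = (\<integral>\<^sup>+ x. indicator A x \<partial>gibbs F)" by simp
      also have "\<dots> \<le> (\<integral>\<^sup>+ x. exp_tilt l F c x * ennreal (exp (- l * tt)) \<partial>gibbs F)"
        by (intro nn_integral_mono ind)
      finally show ?thesis .
    next
      case False thus ?thesis by (simp add: emeasure_notin_sets)
    qed
    also have "\<dots> = (\<integral>\<^sup>+ x. exp_tilt l F c x \<partial>gibbs F) * ennreal (exp (- l * tt))"
      by (rule nn_integral_multc) (simp add: gibbs_def)
    also have "\<dots> \<le> ennreal ((1 - l) powr (- d)) * ennreal (exp (- l * tt))"
      using part1[OF l] by (intro mult_right_mono) (auto simp: d_def)
    also have "\<dots> = ennreal ((d / tt) powr (- d) * exp (- ((1 - d / tt) * tt)))"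
    proof -
      have e: "exp (- l * tt) = exp (- ((1 - d / tt) * tt))" by (simp only: l_def minus_mult_left)
      have "1 - l = d / tt" by (simp add: l_def)
      then show ?thesis unfolding e by (simp add: ennreal_mult[symmetric])
    qed
    also have "\<dots> \<le> ennreal \<delta>"
      using tail_ineq[OF d1 L0] eL by (intro ennreal_leI) (simp add: tt_def)
    finally have "emeasure (gibbs F) A \<le> ennreal \<delta>" .
    hence "measure (gibbs F) A \<le> \<delta>" using dl by (simp add: measure_def enn2real_leI)
    thus ?thesis by (simp add: A_def tt_def d_def L_def)
  qed
  show ?thesis using part1 part2 by (simp add: creal)
qed

end
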